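(* Let $F$ be an infinite field of characteristic $p>2$ and $k$ a positive integer. Then $E^{k^\ast}$ satisfies the $\mathbb{Z}$-graded identity $x^p$ for every variable $x$ of degree $\alpha(x)\neq 0$.
   Context: $L$ is a vector space over $F$ with basis $e_1,e_2,\dots$, $E$ its unital Grassmann algebra (basis $1$ and $e_{i_1}\cdots e_{i_k}$, $i_1<\cdots<i_k$, with $e_ie_j=-e_je_i$). $E^{k^\ast}$ is $E$ with the $\mathbb{Z}$-grading induced by $\|e_i\|=1$ for $i\le k$, $\|e_i\|=0$ for $i>k$, a basis monomial having degree the sum of the degrees of its factors and $1$ having degree $0$. A graded polynomial in variables with prescribed integer degrees $\alpha(x)$ is a graded identity of a $\mathbb{Z}$-graded algebra $A$ if it vanishes whenever each variable $x$ is replaced by an element of the homogeneous component $A_{\alpha(x)}$. *)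

theory Defs
  imports Main "HOL-Computational_Algebra.Primes"
begin

text \<open>Unital Grassmann algebra E over a field 'a on generators e_1, e_2, ... (indexed by positive
naturals).  An element is represented by its coefficient function on basis monomials:
a basis monomial e_{i_1} ... e_{i_m} (i_1 < ... < i_m) is identified with the finite set
{i_1,...,i_m} of positive naturals; the empty set is the unit 1.\<close>

definition grass :: "(nat set \<Rightarrow> 'a::field) set" where
  "grass = {a. finite {S. a S \<noteq> 0} \<and> (\<forall>S. a S \<noteq> 0 \<longrightarrow> finite S \<and> 0 \<notin> S)}"

text \<open>Sign of the product of monomials e_T * e_U (T, U disjoint): one factor -1 for each
pair i in T, j in U with j < i (number of transpositions needed to sort).\<close>
definition grass_sign :: "nat set \<Rightarrow> nat set \<Rightarrow> 'a::field" where
  "grass_sign T U = (-1) ^ card {(i, j). i \<in> T \<and> j \<in> U \<and> j < i}"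

definition grass_mult :: "(nat set \<Rightarrow> 'a::field) \<Rightarrow> (nat set \<Rightarrow> 'a) \<Rightarrow> (nat set \<Rightarrow> 'a)" where
  "grass_mult a b = (\<lambda>S. \<Sum>T\<in>Pow S. grass_sign T (S - T) * a T * b (S - T))"

definition grass_one :: "nat set \<Rightarrow> 'a::field" where
  "grass_one = (\<lambda>S. if S = {} then 1 else 0)"

primrec grass_pow :: "(nat set \<Rightarrow> 'a::field) \<Rightarrow> nat \<Rightarrow> (nat set \<Rightarrow> 'a)" where
  "grass_pow x 0 = grass_one"
| "grass_pow x (Suc n) = grass_mult x (grass_pow x n)"

text \<open>Z-grading of E^{k*}: ||e_i|| = 1 for i \<le> k, 0 for i > k; monomial degree is the sum.\<close>
definition grass_deg :: "nat \<Rightarrow> nat set \<Rightarrow> int" where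
  "grass_deg k S = int (card {i \<in> S. i \<le> k})"

definition grass_component :: "nat \<Rightarrow> int \<Rightarrow> (nat set \<Rightarrow> 'a::field) set" where
  "grass_component k d = {a \<in> grass. \<forall>S. a S \<noteq> 0 \<longrightarrow> grass_deg k S = d}"

end

theory Submission
  imports Defs
begin

lemma sg_union_left:
  assumes "finite T1" "finite T2" "finite U" "T1 \<inter> T2 = {}"
  shows "(grass_sign (T1 \<union> T2) U :: 'a::field) = grass_sign T1 U * grass_sign T2 U"
proof -
  have e: "{(i, j). i \<in> T1 \<union> T2 \<and> j \<in> U \<and> j < i} =
     {(i, j). i \<in> T1 \<and> j \<in> U \<and> j < i} \<union> {(i, j). i \<in> T2 \<and> j \<in> U \<and> j < i}" by auto
  have f1: "finite {(i, j). i \<in> T1 \<and> j \<in> U \<and> j < i}"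
    by (rule finite_subset[of _ "T1 \<times> U"]) (use assms in auto)
  have f2: "finite {(i, j). i \<in> T2 \<and> j \<in> U \<and> j < i}"
    by (rule finite_subset[of _ "T2 \<times> U"]) (use assms in auto)
  show ?thesis unfolding grass_sign_def e
    by (subst card_Un_disjoint[OF f1 f2]) (use assms in \<open>auto simp: power_add\<close>)
qed

lemma sg_union_right:
  assumes "finite U1" "finite U2" "finite T" "U1 \<inter> U2 = {}"
  shows "(grass_sign T (U1 \<union> U2) :: 'a::field) = grass_sign T U1 * grass_sign T U2"
proof -
  have e: "{(i, j). i \<in> T \<and> j \<in> U1 \<union> U2 \<and> j < i} =
     {(i, j). i \<in> T \<and> j \<in> U1 \<and> j < i} \<union> {(i, j). i \<in> T \<and> j \<in> U2 \<and> j < i}" by auto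
  have f1: "finite {(i, j). i \<in> T \<and> j \<in> U1 \<and> j < i}"
    by (rule finite_subset[of _ "T \<times> U1"]) (use assms in auto)
  have f2: "finite {(i, j). i \<in> T \<and> j \<in> U2 \<and> j < i}"
    by (rule finite_subset[of _ "T \<times> U2"]) (use assms in auto)
  show ?thesis unfolding grass_sign_def e
    by (subst card_Un_disjoint[OF f1 f2]) (use assms in \<open>auto simp: power_add\<close>)
qed

lemma sg_swap:
  assumes "finite T" "finite U" "T \<inter> U = {}"
  shows "(grass_sign U T :: 'a::field) = (-1) ^ (card T * card U) * grass_sign T U"
proof -
  define A where "A = {(i, j). i \<in> T \<and> j \<in> U \<and> j < i}"
  define B where "B = {(i, j). i \<in> U \<and> j \<in> T \<and> j < i}"
  define B' where "B' = {(i, j). i \<in> T \<and> j \<in> U \<and> i < j}"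
  have "B' = prod.swap ` B" unfolding B_def B'_def by auto
  hence cB: "card B = card B'" by (simp add: card_image)
  have u: "A \<union> B' = T \<times> U" unfolding A_def B'_def using assms(3)
    by auto
  have fA: "finite A" by (rule finite_subset[of _ "T \<times> U"]) (use assms in \<open>auto simp: A_def\<close>)
  have fB: "finite B'" by (rule finite_subset[of _ "T \<times> U"]) (use assms in \<open>auto simp: B'_def\<close>)
  have dj: "A \<inter> B' = {}" by (auto simp: A_def B'_def)
  have "card A + card B' = card T * card U"
    using card_Un_disjoint[OF fA fB dj] u by (simp add: card_cartesian_product)
  hence "(-1::'a) ^ (card T * card U) * (-1) ^ card A = (-1) ^ card B' * ((-1) ^ card A * (-1) ^ card A)"
    by (metis mult.commute mult.left_commute power_add)
  also have "(-1::'a) ^ card A * (-1) ^ card A = 1"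
    by (metis power_add mult_2 power_mult neg_one_even_power even_mult_iff even_numeral)
  finally show ?thesis unfolding grass_sign_def using cB by (simp add: A_def B_def)
qed


definition gadd :: "(nat set \<Rightarrow> 'a::field) \<Rightarrow> (nat set \<Rightarrow> 'a) \<Rightarrow> (nat set \<Rightarrow> 'a)" where
  "gadd u v = (\<lambda>S. u S + v S)"
definition gsc :: "'a::field \<Rightarrow> (nat set \<Rightarrow> 'a) \<Rightarrow> (nat set \<Rightarrow> 'a)" where
  "gsc c u = (\<lambda>S. c * u S)"
definition gfin :: "(nat set \<Rightarrow> 'a::field) \<Rightarrow> bool" where
  "gfin u \<longleftrightarrow> (\<forall>S. infinite S \<longrightarrow> u S = 0)"
definition central :: "(nat set \<Rightarrow> 'a::field) \<Rightarrow> bool" where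
  "central u \<longleftrightarrow> (\<forall>w. grass_mult u w = grass_mult w u)"

lemma sg_empty_right [simp]: "grass_sign T {} = 1"
  unfolding grass_sign_def by simp
lemma sg_empty_left [simp]: "grass_sign {} T = 1"
  unfolding grass_sign_def by simp

lemma mult_inf: "infinite S \<Longrightarrow> grass_mult u w S = 0"
  unfolding grass_mult_def by simp

lemma gfin_mult: "gfin (grass_mult u w)"
  unfolding gfin_def using mult_inf by blast

lemma mult_add_left: "grass_mult (gadd u v) w = gadd (grass_mult u w) (grass_mult v w)"
  unfolding grass_mult_def gadd_def by (auto simp: sum.distrib[symmetric] ring_distribs)

lemma mult_add_right: "grass_mult w (gadd u v) = gadd (grass_mult w u) (grass_mult w v)"
  unfolding grass_mult_def gadd_def by (auto simp: sum.distrib[symmetric] ring_distribs)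

lemma mult_sc_left: "grass_mult (gsc c u) w = gsc c (grass_mult u w)"
  unfolding grass_mult_def gsc_def by (auto simp: sum_distrib_left mult_ac)

lemma mult_sc_right: "grass_mult w (gsc c u) = gsc c (grass_mult w u)"
  unfolding grass_mult_def gsc_def by (auto simp: sum_distrib_left mult_ac)

lemma mult_zero_right: "grass_mult w (\<lambda>_. 0) = (\<lambda>_. 0)"
  unfolding grass_mult_def by simp

lemma mult_zero_left: "grass_mult (\<lambda>_. 0) w = (\<lambda>_. 0)"
  unfolding grass_mult_def by simp

lemma mult_one_right: "grass_mult w grass_one = (\<lambda>S. if finite S then w S else 0)"
proof
  fix S
  show "grass_mult w grass_one S = (if finite S then w S else 0)"
  proof (cases "finite S")
    case True
    have "grass_mult w grass_one S = (\<Sum>T\<in>Pow S. if T = S then w T else 0)"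
      unfolding grass_mult_def grass_one_def
      by (rule sum.cong) auto
    also have "\<dots> = w S" using True by simp
    finally show ?thesis using True by simp
  qed (simp add: mult_inf)
qed

lemma mult_one_left: "grass_mult grass_one w = (\<lambda>S. if finite S then w S else 0)"
proof
  fix S
  show "grass_mult grass_one w S = (if finite S then w S else 0)"
  proof (cases "finite S")
    case True
    have "grass_mult grass_one w S = (\<Sum>T\<in>Pow S. if T = {} then w S else 0)"
      unfolding grass_mult_def grass_one_def
      by (rule sum.cong) (auto simp: grass_sign_def)
    also have "\<dots> = w S" using True by simp
    finally show ?thesis using True by simp
  qed (simp add: mult_inf)
qed

lemma mult_assoc: "grass_mult (grass_mult a b) c = grass_mult a (grass_mult b c)"
proof
  fix S
  show "grass_mult (grass_mult a b) c S = grass_mult a (grass_mult b c) S"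
  proof (cases "finite S")
    case fin: True
    have "grass_mult (grass_mult a b) c S =
      (\<Sum>T\<in>Pow S. \<Sum>U\<in>Pow T. grass_sign T (S - T) * grass_sign U (T - U) * a U * b (T - U) * c (S - T))"
      unfolding grass_mult_def by (simp add: sum_distrib_left sum_distrib_right mult_ac)
    also have "\<dots> = (\<Sum>(T,U)\<in>Sigma (Pow S) Pow. grass_sign T (S - T) * grass_sign U (T - U) * a U * b (T - U) * c (S - T))"
      by (rule sum.Sigma) (use fin in \<open>auto intro: finite_subset\<close>)
    also have "\<dots> = (\<Sum>(U,V)\<in>Sigma (Pow S) (\<lambda>U. Pow (S - U)). grass_sign U (S - U) * grass_sign V (S - U - V) * a U * b V * c (S - U - V))"
    proof (rule sum.reindex_bij_witness[where i = "\<lambda>(U,V). (U \<union> V, U)" and j = "\<lambda>(T,U). (U, T - U)"])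
      fix tu assume "tu \<in> Sigma (Pow S) Pow"
      then obtain T U where tu: "tu = (T,U)" "T \<subseteq> S" "U \<subseteq> T" by auto
      have fT: "finite T" "finite U" "finite (T - U)" "finite (S - T)"
        using tu(2,3) fin by (meson Diff_subset finite_subset order_trans)+
      have e1: "S - U - (T - U) = S - T" using tu by auto
      have d1: "S - U = (T - U) \<union> (S - T)" using tu by auto
      have d2: "T = U \<union> (T - U)" using tu by auto
      have "grass_sign U (S - U) = (grass_sign U (T - U) * grass_sign U (S - T) :: 'a)"
        unfolding d1 by (rule sg_union_right) (use fT in auto)
      moreover have "grass_sign T (S - T) = (grass_sign U (S - T) * grass_sign (T - U) (S - T) :: 'a)"
        by (subst d2, rule sg_union_left) (use fT in auto)
      ultimately show "(case (case tu of (T, U) \<Rightarrow> (U, T - U)) of (U, V) \<Rightarrow> grass_sign U (S - U) * grass_sign V (S - U - V) * a U * b V * c (S - U - V)) =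
         (case tu of (T, U) \<Rightarrow> grass_sign T (S - T) * grass_sign U (T - U) * a U * b (T - U) * c (S - T))"
        using tu e1 by (simp add: mult_ac)
    qed auto
    also have "\<dots> = (\<Sum>U\<in>Pow S. \<Sum>V\<in>Pow (S - U). grass_sign U (S - U) * grass_sign V (S - U - V) * a U * b V * c (S - U - V))"
      by (rule sum.Sigma[symmetric]) (use fin in \<open>auto intro: finite_subset\<close>)
    also have "\<dots> = grass_mult a (grass_mult b c) S"
      unfolding grass_mult_def by (simp add: sum_distrib_left sum_distrib_right mult_ac)
    finally show ?thesis .
  qed (simp add: mult_inf)
qed


lemma comm_sign:
  assumes h: "\<And>T U. u T \<noteq> 0 \<Longrightarrow> w U \<noteq> 0 \<Longrightarrow> finite T \<Longrightarrow> finite U \<Longrightarrow> T \<inter> U = {} \<Longrightarrow>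
     (-1::'a::field) ^ (card T * card U) = e"
  shows "grass_mult w u = gsc e (grass_mult u w)"
proof
  fix S
  show "grass_mult w u S = gsc e (grass_mult u w) S"
  proof (cases "finite S")
    case fin: True
    have "grass_mult w u S = (\<Sum>T\<in>Pow S. grass_sign T (S - T) * w T * u (S - T))"
      unfolding grass_mult_def ..
    also have "\<dots> = (\<Sum>T\<in>Pow S. grass_sign (S - T) T * w (S - T) * u T)"
      by (rule sum.reindex_bij_witness[where i = "\<lambda>T. S - T" and j = "\<lambda>T. S - T"])
         (auto simp: Diff_Diff_Int inf.absorb2)
    also have "\<dots> = (\<Sum>T\<in>Pow S. e * (grass_sign T (S - T) * u T * w (S - T)))"
    proof (rule sum.cong[OF refl])
      fix T assume T: "T \<in> Pow S"
      show "grass_sign (S - T) T * w (S - T) * u T = e * (grass_sign T (S - T) * u T * w (S - T))"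
      proof (cases "u T = 0 \<or> w (S - T) = 0")
        case False
        have fT: "finite T" "finite (S - T)" using T fin by (auto intro: finite_subset)
        have "grass_sign (S - T) T = (-1::'a) ^ (card T * card (S - T)) * grass_sign T (S - T)"
          by (rule sg_swap) (use fT in auto)
        also have "(-1::'a) ^ (card T * card (S - T)) = e"
          using h[of T "S - T"] False fT by auto
        finally show ?thesis by (simp add: mult_ac)
      qed auto
    qed
    also have "\<dots> = gsc e (grass_mult u w) S"
      unfolding gsc_def grass_mult_def by (simp add: sum_distrib_left)
    finally show ?thesis .
  qed (simp add: mult_inf gsc_def)
qed

lemma central_even:
  assumes "\<And>T. u T \<noteq> 0 \<Longrightarrow> even (card T)"
  shows "central u"
  unfolding central_def
proof
  fix w
  have "grass_mult w u = gsc 1 (grass_mult u w)"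
    by (rule comm_sign) (use assms in auto)
  thus "grass_mult u w = grass_mult w u" by (simp add: gsc_def)
qed

lemma odd_square:
  assumes "\<And>T. u T \<noteq> 0 \<Longrightarrow> odd (card T)" and two: "(2::'a::field) \<noteq> 0"
  shows "grass_mult u u = (\<lambda>_. (0::'a))"
proof
  fix S
  have "grass_mult u u = gsc (-1) (grass_mult u u)"
    by (rule comm_sign) (use assms in auto)
  hence "grass_mult u u S = - grass_mult u u S"
    by (metis gsc_def mult_minus1)
  hence "2 * grass_mult u u S = 0" by simp
  thus "grass_mult u u S = 0" using two by simp
qed

lemma mult_one_gfin: "gfin w \<Longrightarrow> grass_mult w grass_one = w"
  unfolding mult_one_right gfin_def by auto
lemma mult_one_gfin': "gfin w \<Longrightarrow> grass_mult grass_one w = w"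
  unfolding mult_one_left gfin_def by auto

lemma central_pow: assumes cu: "central u" shows "central (grass_pow u n)"
proof (induction n)
  case 0
  show ?case unfolding central_def by (simp add: mult_one_left mult_one_right)
next
  case (Suc n)
  show ?case unfolding central_def
  proof
    fix w
    have "grass_mult (grass_pow u (Suc n)) w = grass_mult u (grass_mult (grass_pow u n) w)"
      by (simp add: mult_assoc)
    also have "\<dots> = grass_mult u (grass_mult w (grass_pow u n))"
      using Suc.IH unfolding central_def by simp
    also have "\<dots> = grass_mult (grass_mult w u) (grass_pow u n)"
      using cu unfolding central_def by (simp add: mult_assoc[symmetric])
    also have "\<dots> = grass_mult w (grass_pow u (Suc n))"
      by (simp add: mult_assoc)
    finally show "grass_mult (grass_pow u (Suc n)) w = grass_mult w (grass_pow u (Suc n))" .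
  qed
qed

lemma binom:
  assumes c: "central u" and vv: "grass_mult v v = (\<lambda>_. 0)" and fu: "gfin u" and fv: "gfin v"
  shows "grass_pow (gadd u v) (Suc m) =
    gadd (grass_pow u (Suc m)) (gsc (of_nat (Suc m)) (grass_mult (grass_pow u m) v))"
proof (induction m)
  case 0
  have "gfin (gadd u v)" using fu fv by (simp add: gfin_def gadd_def)
  thus ?case using fu fv by (simp add: mult_one_gfin mult_one_gfin' gsc_def)
next
  case (Suc m)
  define c where "c = (of_nat (Suc m) :: 'a)"
  have cu: "central (grass_pow u (Suc m))" by (rule central_pow[OF c])
  have A: "grass_mult u (grass_mult (grass_pow u m) v) = grass_mult (grass_pow u (Suc m)) v"
    by (simp add: mult_assoc)
  have B: "grass_mult v (grass_pow u (Suc m)) = grass_mult (grass_pow u (Suc m)) v"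
    using cu unfolding central_def by simp
  have C: "grass_mult v (grass_mult (grass_pow u m) v) = (\<lambda>_. 0)"
  proof -
    have "grass_mult v (grass_mult (grass_pow u m) v) = grass_mult (grass_mult v (grass_pow u m)) v"
      by (simp add: mult_assoc)
    also have "\<dots> = grass_mult (grass_mult (grass_pow u m) v) v"
      using central_pow[OF c, of m] unfolding central_def by simp
    also have "\<dots> = (\<lambda>_. 0)" by (simp add: mult_assoc vv mult_zero_right)
    finally show ?thesis .
  qed
  have "grass_pow (gadd u v) (Suc (Suc m)) = grass_mult (gadd u v)
     (gadd (grass_pow u (Suc m)) (gsc c (grass_mult (grass_pow u m) v)))"
    using Suc.IH by (simp add: c_def)
  also have "\<dots> = gadd (gadd (grass_pow u (Suc (Suc m))) (gsc c (grass_mult (grass_pow u (Suc m)) v)))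
      (gadd (grass_mult (grass_pow u (Suc m)) v) (gsc c (\<lambda>_. 0)))"
    by (simp only: mult_add_left mult_add_right mult_sc_right A B C grass_pow.simps(2)[symmetric])
       (rule ext, simp add: gadd_def gsc_def algebra_simps)
  also have "\<dots> = gadd (grass_pow u (Suc (Suc m))) (gsc (of_nat (Suc (Suc m))) (grass_mult (grass_pow u (Suc m)) v))"
    by (auto simp: gadd_def gsc_def c_def algebra_simps)
  finally show ?case .
qed

lemma pow_zero_fun: "grass_pow (\<lambda>_. 0) (Suc m) = (\<lambda>_. (0::'a::field))"
  by (simp add: mult_zero_left)

lemma even_pow_zero:
  assumes p0: "of_nat (Suc m) = (0::'a::field)"
  shows "finite F \<Longrightarrow> \<forall>a::nat set \<Rightarrow> 'a. (\<forall>T. a T \<noteq> 0 \<longrightarrow> T \<in> F \<and> even (card T) \<and> T \<noteq> {}) \<and> gfin a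
     \<longrightarrow> grass_pow a (Suc m) = (\<lambda>_. 0)"
proof (induction F rule: finite_induct)
  case empty
  show ?case
  proof (intro allI impI)
    fix a :: "nat set \<Rightarrow> 'a"
    assume "(\<forall>T. a T \<noteq> 0 \<longrightarrow> T \<in> {} \<and> even (card T) \<and> T \<noteq> {}) \<and> gfin a"
    hence "a = (\<lambda>_. 0)" by auto
    thus "grass_pow a (Suc m) = (\<lambda>_. 0)" by (simp add: mult_zero_left)
  qed
next
  case (insert T0 F)
  show ?case
  proof (intro allI impI)
    fix a :: "nat set \<Rightarrow> 'a"
    assume a: "(\<forall>T. a T \<noteq> 0 \<longrightarrow> T \<in> insert T0 F \<and> even (card T) \<and> T \<noteq> {}) \<and> gfin a"
    define a' where "a' = (\<lambda>T. if T = T0 then 0 else a T)"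
    define v where "v = (\<lambda>T. if T = T0 then a T0 else 0)"
    have aeq: "a = gadd a' v" unfolding gadd_def a'_def v_def by auto
    have "(\<forall>T. a' T \<noteq> 0 \<longrightarrow> T \<in> F \<and> even (card T) \<and> T \<noteq> {}) \<and> gfin a'"
      using a unfolding a'_def gfin_def by auto
    hence IH: "grass_pow a' (Suc m) = (\<lambda>_. 0)"
      using insert.IH by blast
    have ca: "central a'" by (rule central_even) (use a in \<open>auto simp: a'_def split: if_splits\<close>)
    have vv: "grass_mult v v = (\<lambda>_. 0)"
    proof
      fix S
      show "grass_mult v v S = 0" unfolding grass_mult_def
      proof (rule sum.neutral, rule ballI)
        fix T assume T: "T \<in> Pow S"
        show "grass_sign T (S - T) * v T * v (S - T) = 0"
        proof (rule ccontr)
          assume "grass_sign T (S - T) * v T * v (S - T) \<noteq> 0"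
          hence "v T \<noteq> 0" "v (S - T) \<noteq> 0" by auto
          hence "T = T0" "S - T = T0" "a T0 \<noteq> 0" unfolding v_def by (auto split: if_splits)
          hence "T0 = {}" by auto
          thus False using a \<open>a T0 \<noteq> 0\<close> by auto
        qed
      qed
    qed
    have fa': "gfin a'" "gfin v" using a unfolding gfin_def a'_def v_def by auto
    have "grass_pow a (Suc m) = gadd (grass_pow a' (Suc m)) (gsc (of_nat (Suc m)) (grass_mult (grass_pow a' m) v))"
      unfolding aeq by (rule binom[OF ca vv fa'])
    also have "\<dots> = (\<lambda>_. 0)" unfolding IH p0 by (simp add: gadd_def gsc_def)
    finally show "grass_pow a (Suc m) = (\<lambda>_. 0)" .
  qed
qed

theorem mainTheorem5:
  fixes p k :: nat and d :: int
  assumes "infinite (UNIV :: 'a::field set)"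
    and "prime p" and "CHAR('a) = p" and "p > 2"
    and "k > 0"
    and "d \<noteq> 0"
  shows "\<forall>x \<in> (grass_component k d :: (nat set \<Rightarrow> 'a) set). grass_pow x p = (\<lambda>_. 0)"
proof
  fix x :: "nat set \<Rightarrow> 'a"
  assume x: "x \<in> grass_component k d"
  obtain m where pm: "p = Suc m" using assms(4) by (cases p) auto
  have "of_nat p = (0::'a)" using assms(3) by (metis of_nat_CHAR)
  hence p0: "of_nat (Suc m) = (0::'a)" using pm by simp
  have two: "(2::'a) \<noteq> 0"
  proof
    assume "(2::'a) = 0"
    hence "of_nat 2 = (0::'a)" by simp
    hence "p dvd 2" using assms(3) of_nat_eq_0_iff_char_dvd by metis
    thus False using assms(4) by (auto dest: dvd_imp_le)
  qed
  have xg: "x \<in> grass" and xd: "\<And>S. x S \<noteq> 0 \<Longrightarrow> grass_deg k S = d"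
    using x unfolding grass_component_def by auto
  have x0: "x {} = 0" using xd[of "{}"] assms(6) by (auto simp: grass_deg_def)
  have fx: "finite {S. x S \<noteq> 0}" and gx: "gfin x" using xg unfolding grass_def gfin_def by auto
  define a where "a = (\<lambda>S. if even (card S) then x S else 0)"
  define b where "b = (\<lambda>S. if even (card S) then 0 else x S)"
  have xeq: "x = gadd a b" unfolding gadd_def a_def b_def by auto
  have ca: "central a" by (rule central_even) (auto simp: a_def split: if_splits)
  have bb: "grass_mult b b = (\<lambda>_. 0)" by (rule odd_square[OF _ two]) (auto simp: b_def split: if_splits)
  have fab: "gfin a" "gfin b" using gx unfolding gfin_def a_def b_def by auto
  have "(\<forall>T. a T \<noteq> 0 \<longrightarrow> T \<in> {S. x S \<noteq> 0} \<and> even (card T) \<and> T \<noteq> {}) \<and> gfin a"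
    using x0 fab unfolding a_def by (auto split: if_splits)
  hence ap: "grass_pow a (Suc m) = (\<lambda>_. 0)"
    using even_pow_zero[OF p0 fx] by blast
  have "grass_pow x (Suc m) = gadd (grass_pow a (Suc m)) (gsc (of_nat (Suc m)) (grass_mult (grass_pow a m) b))"
    unfolding xeq by (rule binom[OF ca bb fab])
  also have "\<dots> = (\<lambda>_. 0)" unfolding ap p0 by (simp add: gadd_def gsc_def)
  finally show "grass_pow x p = (\<lambda>_. 0)" unfolding pm .
qed

end
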